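(* Let $N=(V,E,\tau,\{u_{ij}\})$ be a temporal network with uniform static edge length $\tau$ and piecewise constant capacities, $T$ a time horizon, and $\phi$ a cut function of a minimum $(s,0)$-$(d,T)$ cut of $\textsc{TEN}(N,T)$. Let $X_\phi=\{i\in V:\phi(i)\in\{0,T+1\}\}$ and let $C\subseteq V\setminus X_\phi$ satisfy $\phi(i)\notin F(\phi,C,i)$ for all $i\in C$. Then $\mathrm{cost}(\phi_C^+)=\mathrm{cost}(\phi_C^-)=\mathrm{cost}(\phi)$.
   Context: $\textsc{TEN}(N,T)$ is the steady-state network on $V\times[0,T]$ with an edge $(i,t)\to(j,t+\tau)$ of capacity $u_{ij}(t)$ whenever $ij\in E$ and $u_{ij}(t)\ne0$, and an infinite-capacity edge $(i,t)\to(i,t+1)$ for $t\in[0,T-1]$; source $(s,0)$, sink $(d,T)$. A cut function is $\phi:V\to[0,T+1]$ with $\phi(s)=0$, $\phi(d)=T+1$, representing the cut with source side $\{(i,t):t\ge\phi(i)\}$; $\mathrm{cost}(\phi)$ is the total capacity of edges from source side to sink side. $\mathcal T=\{t:\exists ij\in E,\ u_{ij}(t)\ne u_{ij}(t-1)\}\cup\{0,T,T+1\}$. For $C\subseteq V\setminus X_\phi$: $\phi_C^+(i)=\phi(i)+1$ for $i\in C$ and $\phi_C^+(i)=\phi(i)$ otherwise; $\phi_C^-(i)=\phi(i)-1$ for $i\in C$ and $\phi_C^-(i)=\phi(i)$ otherwise. For $i\in C$, the forbidden set $F(\phi,C,i)$ is the union of $\mathcal T\cup\{\theta+\tau:\theta\in\mathcal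 T\}$, $\{\phi(j)-\tau,\phi(j):ij\in E,\ j\in V\setminus C\}$, and $\{\phi(j)+\tau,\phi(j):ji\in E,\ j\in V\setminus C\}$. *)

theory Defs
  imports "HOL-Library.Extended_Nonnegative_Real"
begin

definition temporal_network ::
  "'v set \<Rightarrow> ('v \<times> 'v) set \<Rightarrow> 'v \<Rightarrow> 'v \<Rightarrow> int \<Rightarrow> ('v \<Rightarrow> 'v \<Rightarrow> int \<Rightarrow> real) \<Rightarrow> bool" where
  "temporal_network V E s d \<tau> u \<longleftrightarrow>
     finite V \<and> s \<in> V \<and> d \<in> V \<and> s \<noteq> d \<and> E \<subseteq> V \<times> V \<and> 0 < \<tau> \<and>
     (\<forall>(i,j)\<in>E. \<forall>t. 0 \<le> u i j t) \<and>
     finite {t. \<exists>(i,j)\<in>E. u i j t \<noteq> u i j (t - 1)}"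

definition ten_is_cut :: "'v set \<Rightarrow> 'v \<Rightarrow> 'v \<Rightarrow> int \<Rightarrow> ('v \<times> int) set \<Rightarrow> bool" where
  "ten_is_cut V s d T S \<longleftrightarrow> S \<subseteq> V \<times> {0..T} \<and> (s, 0) \<in> S \<and> (d, T) \<notin> S"

text \<open>Capacity of a cut S of TEN(N,T): transit edges (i,t) -> (j,t+tau) for ij in E,
u i j t \<noteq> 0, with both endpoints in V \<times> [0,T] (capacity u i j t), plus
holdover edges (i,t) -> (i,t+1), t in [0,T-1], of infinite capacity.\<close>

definition ten_cut_cost ::
  "'v set \<Rightarrow> ('v \<times> 'v) set \<Rightarrow> int \<Rightarrow> ('v \<Rightarrow> 'v \<Rightarrow> int \<Rightarrow> real) \<Rightarrow> int \<Rightarrow> ('v \<times> int) set \<Rightarrow> ennreal" where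
  "ten_cut_cost V E \<tau> u T S =
     (\<Sum>(i,j,t)\<in>{(i,j,t). (i,j) \<in> E \<and> 0 \<le> t \<and> t + \<tau> \<le> T \<and> u i j t \<noteq> 0 \<and>
                          (i,t) \<in> S \<and> (j, t + \<tau>) \<notin> S}. ennreal (u i j t))
   + (\<Sum>(i,t)\<in>{(i,t). i \<in> V \<and> 0 \<le> t \<and> t \<le> T - 1 \<and> (i,t) \<in> S \<and> (i, t + 1) \<notin> S}. \<infinity>)"

definition ten_min_cut ::
  "'v set \<Rightarrow> ('v \<times> 'v) set \<Rightarrow> 'v \<Rightarrow> 'v \<Rightarrow> int \<Rightarrow> ('v \<Rightarrow> 'v \<Rightarrow> int \<Rightarrow> real) \<Rightarrow> int \<Rightarrow> ('v \<times> int) set \<Rightarrow> bool" where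
  "ten_min_cut V E s d \<tau> u T S \<longleftrightarrow> ten_is_cut V s d T S \<and>
     (\<forall>S'. ten_is_cut V s d T S' \<longrightarrow> ten_cut_cost V E \<tau> u T S \<le> ten_cut_cost V E \<tau> u T S')"

definition cut_function :: "'v set \<Rightarrow> 'v \<Rightarrow> 'v \<Rightarrow> int \<Rightarrow> ('v \<Rightarrow> int) \<Rightarrow> bool" where
  "cut_function V s d T \<phi> \<longleftrightarrow> (\<forall>i\<in>V. 0 \<le> \<phi> i \<and> \<phi> i \<le> T + 1) \<and> \<phi> s = 0 \<and> \<phi> d = T + 1"

definition cut_of :: "'v set \<Rightarrow> int \<Rightarrow> ('v \<Rightarrow> int) \<Rightarrow> ('v \<times> int) set" where
  "cut_of V T \<phi> = {(i,t). i \<in> V \<and> 0 \<le> t \<and> t \<le> T \<and> \<phi> i \<le> t}"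

definition cost ::
  "'v set \<Rightarrow> ('v \<times> 'v) set \<Rightarrow> int \<Rightarrow> ('v \<Rightarrow> 'v \<Rightarrow> int \<Rightarrow> real) \<Rightarrow> int \<Rightarrow> ('v \<Rightarrow> int) \<Rightarrow> ennreal" where
  "cost V E \<tau> u T \<phi> = ten_cut_cost V E \<tau> u T (cut_of V T \<phi>)"

definition X_set :: "'v set \<Rightarrow> int \<Rightarrow> ('v \<Rightarrow> int) \<Rightarrow> 'v set" where
  "X_set V T \<phi> = {i \<in> V. \<phi> i \<in> {0, T + 1}}"

definition phi_plus :: "('v \<Rightarrow> int) \<Rightarrow> 'v set \<Rightarrow> 'v \<Rightarrow> int" where
  "phi_plus \<phi> C i = (if i \<in> C then \<phi> i + 1 else \<phi> i)"

definition phi_minus :: "('v \<Rightarrow> int) \<Rightarrow> 'v set \<Rightarrow> 'v \<Rightarrow> int" where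
  "phi_minus \<phi> C i = (if i \<in> C then \<phi> i - 1 else \<phi> i)"

definition change_times ::
  "('v \<times> 'v) set \<Rightarrow> ('v \<Rightarrow> 'v \<Rightarrow> int \<Rightarrow> real) \<Rightarrow> int \<Rightarrow> int set" where
  "change_times E u T = {t. \<exists>(i,j)\<in>E. u i j t \<noteq> u i j (t - 1)} \<union> {0, T, T + 1}"

definition forbidden ::
  "'v set \<Rightarrow> ('v \<times> 'v) set \<Rightarrow> int \<Rightarrow> ('v \<Rightarrow> 'v \<Rightarrow> int \<Rightarrow> real) \<Rightarrow> int \<Rightarrow>
   ('v \<Rightarrow> int) \<Rightarrow> 'v set \<Rightarrow> 'v \<Rightarrow> int set" where
  "forbidden V E \<tau> u T \<phi> C i =
     change_times E u T \<union> (\<lambda>\<theta>. \<theta> + \<tau>) ` change_times E u T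
     \<union> {x. \<exists>j. (i,j) \<in> E \<and> j \<in> V - C \<and> (x = \<phi> j - \<tau> \<or> x = \<phi> j)}
     \<union> {x. \<exists>j. (j,i) \<in> E \<and> j \<in> V - C \<and> (x = \<phi> j + \<tau> \<or> x = \<phi> j)}"

end

theory Submission imports Defs begin

lemma sp_l: fixes a c :: int assumes "a \<le> c"
  shows "sum g {a..c} = g a + sum g {a+1..c}"
proof -
  have "{a..c} = insert a {a+1..c}" using assms by auto
  thus ?thesis by simp
qed

lemma sp_r: fixes a c :: int assumes "a \<le> c"
  shows "sum g {a..c} = sum g {a..c-1} + g c"
proof -
  have "{a..c} = insert c {a..c-1}" using assms by auto
  thus ?thesis by (simp add: add.commute)
qed

lemma L_low: fixes a c :: int and g :: "int \<Rightarrow> real"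
  assumes "g a = g (a-1)" "a \<noteq> c+1"
  shows "sum g {a+1..c} + sum g {a-1..c} = 2 * sum g {a..c}"
proof (cases "a \<le> c")
  case True
  have "sum g {a-1..c} = g (a-1) + sum g {a..c}" using sp_l[of "a-1" c g] True by simp
  moreover have "sum g {a..c} = g a + sum g {a+1..c}" using sp_l[OF True] by simp
  ultimately show ?thesis using assms by simp
next
  case False then show ?thesis using assms by simp
qed

lemma L_up: fixes a c :: int and g :: "int \<Rightarrow> real"
  assumes "g (c+1) = g c" "a \<noteq> c+1"
  shows "sum g {a..c+1} + sum g {a..c-1} = 2 * sum g {a..c}"
proof (cases "a \<le> c")
  case True
  have "sum g {a..c+1} = sum g {a..c} + g (c+1)" using sp_r[of a "c+1" g] True by simp
  moreover have "sum g {a..c} = sum g {a..c-1} + g c" using sp_r[OF True] by simp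
  ultimately show ?thesis using assms by simp
next
  case False then show ?thesis using assms by simp
qed

lemma L_both: fixes a c :: int and g :: "int \<Rightarrow> real"
  assumes "g a = g (a-1)" "g (c+1) = g c"
  shows "sum g {a+1..c+1} + sum g {a-1..c-1} = 2 * sum g {a..c}"
proof (cases "a \<le> c+1")
  case True
  have "sum g {a..c+1} = g a + sum g {a+1..c+1}" using sp_l[of a "c+1" g] True by simp
  moreover have "sum g {a..c+1} = sum g {a..c} + g (c+1)" using sp_r[of a "c+1" g] True by simp
  moreover have "sum g {a-1..c} = g (a-1) + sum g {a..c}" using sp_l[of "a-1" c g] True by simp
  moreover have "sum g {a-1..c} = sum g {a-1..c-1} + g c" using sp_r[of "a-1" c g] True by simp
  ultimately show ?thesis using assms by simp
next
  case False then show ?thesis using assms by simp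
qed


lemma cost_eq:
  fixes \<psi> :: "'v \<Rightarrow> int"
  assumes fE: "finite E" and EV: "E \<subseteq> V \<times> V" and nn: "\<forall>(i,j)\<in>E. \<forall>t. 0 \<le> u i j t"
    and rng: "\<forall>i\<in>V. 0 \<le> \<psi> i \<and> \<psi> i \<le> T + 1" and tau: "0 < \<tau>"
  shows "cost V E \<tau> u T \<psi> = ennreal (\<Sum>(i,j)\<in>E. \<Sum>t\<in>{\<psi> i..\<psi> j - \<tau> - 1}. u i j t)"
proof -
  let ?S = "cut_of V T \<psi>"
  have h: "{(i,t). i \<in> V \<and> 0 \<le> t \<and> t \<le> T - 1 \<and> (i,t) \<in> ?S \<and> (i, t + 1) \<notin> ?S} = {}"
    by (auto simp: cut_of_def)
  define B where "B = {(i,j,t). (i,j) \<in> E \<and> t \<in> {\<psi> i..\<psi> j - \<tau> - 1}}"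
  define A where "A = {(i,j,t). (i,j) \<in> E \<and> 0 \<le> t \<and> t + \<tau> \<le> T \<and> u i j t \<noteq> 0 \<and>
                          (i,t) \<in> ?S \<and> (j, t + \<tau>) \<notin> ?S}"
  have AB: "A = {x \<in> B. (case x of (i,j,t) \<Rightarrow> u i j t) \<noteq> 0}"
  proof (rule set_eqI, clarify)
    fix i j t
    show "((i,j,t) \<in> A) = ((i,j,t) \<in> {x \<in> B. (case x of (i,j,t) \<Rightarrow> u i j t) \<noteq> 0})"
    proof
      assume "(i,j,t) \<in> A"
      then show "(i,j,t) \<in> {x \<in> B. (case x of (i,j,t) \<Rightarrow> u i j t) \<noteq> 0}"
        using EV rng tau unfolding A_def B_def cut_of_def by auto
    next
      assume a: "(i,j,t) \<in> {x \<in> B. (case x of (i,j,t) \<Rightarrow> u i j t) \<noteq> 0}"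
      then have ij: "(i,j) \<in> E" "\<psi> i \<le> t" "t \<le> \<psi> j - \<tau> - 1" "u i j t \<noteq> 0"
        unfolding B_def by auto
      then have "i \<in> V" "j \<in> V" using EV by auto
      moreover have "0 \<le> \<psi> i" "\<psi> j \<le> T + 1" using rng \<open>i \<in> V\<close> \<open>j \<in> V\<close> by auto
      ultimately show "(i,j,t) \<in> A" using ij tau unfolding A_def cut_of_def by simp
    qed
  qed
  have Beq: "B = (\<lambda>((i,j),t). (i,j,t)) ` (SIGMA p:E. {\<psi> (fst p)..\<psi> (snd p) - \<tau> - 1})"
    unfolding B_def by force
  have inj: "inj_on (\<lambda>((i,j),t). (i,j,t)) X" for X :: "(('v\<times>'v)\<times>int) set"
    by (auto simp: inj_on_def)
  have fB: "finite B" unfolding Beq using fE by auto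
  have "(\<Sum>(i,j,t)\<in>A. ennreal (u i j t)) = (\<Sum>(i,j,t)\<in>B. ennreal (u i j t))"
    unfolding AB by (rule sum.mono_neutral_left[OF fB]) auto
  also have "\<dots> = ennreal (\<Sum>(i,j,t)\<in>B. u i j t)"
    using nn unfolding B_def by (subst sum_ennreal[symmetric]) (auto simp: case_prod_beta intro!: sum.cong)
  also have "(\<Sum>(i,j,t)\<in>B. u i j t) = (\<Sum>(i,j)\<in>E. \<Sum>t\<in>{\<psi> i..\<psi> j - \<tau> - 1}. u i j t)"
  proof -
    have "(\<Sum>p\<in>E. \<Sum>t\<in>{\<psi> (fst p)..\<psi> (snd p) - \<tau> - 1}. u (fst p) (snd p) t)
      = (\<Sum>x\<in>(SIGMA p:E. {\<psi> (fst p)..\<psi> (snd p) - \<tau> - 1}). u (fst (fst x)) (snd (fst x)) (snd x))"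
      by (subst sum.Sigma[OF fE]) (auto simp: case_prod_beta)
    then show ?thesis unfolding Beq by (subst sum.reindex[OF inj]) (simp add: case_prod_beta)
  qed
  finally show ?thesis unfolding cost_def ten_cut_cost_def h A_def by simp
qed


lemma L_gen:
  fixes g :: "int \<Rightarrow> real" and a c :: int
  assumes "a1 = a + da" "c1 = c + dc" "a0 = a - da" "c0 = c - dc"
    and "da \<in> {0,1}" "dc \<in> {0,1}"
    and "da = 1 \<Longrightarrow> g a = g (a-1)" "dc = 1 \<Longrightarrow> g (c+1) = g c"
    and "da \<noteq> dc \<Longrightarrow> a \<noteq> c + 1"
  shows "sum g {a1..c1} + sum g {a0..c0} = 2 * sum g {a..c}"
  using assms L_low[of g a c] L_up[of g c a] L_both[of g a c] by auto

theorem mainTheorem3: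
  fixes V :: "'v set" and E :: "('v \<times> 'v) set" and s d :: 'v
    and \<tau> T :: int and u :: "'v \<Rightarrow> 'v \<Rightarrow> int \<Rightarrow> real"
    and \<phi> :: "'v \<Rightarrow> int" and C :: "'v set"
  assumes "temporal_network V E s d \<tau> u"
    and "0 \<le> T"
    and "cut_function V s d T \<phi>"
    and "ten_min_cut V E s d \<tau> u T (cut_of V T \<phi>)"
    and "C \<subseteq> V - X_set V T \<phi>"
    and "\<forall>i\<in>C. \<phi> i \<notin> forbidden V E \<tau> u T \<phi> C i"
  shows "cost V E \<tau> u T (phi_plus \<phi> C) = cost V E \<tau> u T \<phi>
       \<and> cost V E \<tau> u T (phi_minus \<phi> C) = cost V E \<tau> u T \<phi>"
proof -
  from assms(1) have fV: "finite V" and sV: "s \<in> V" and dV: "d \<in> V" and EV: "E \<subseteq> V \<times> V"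
    and tau: "0 < \<tau>" and nn: "\<forall>(i,j)\<in>E. \<forall>t. 0 \<le> u i j t"
    unfolding temporal_network_def by auto
  have fE: "finite E" using EV fV by (meson finite_SigmaI finite_subset)
  from assms(3) have rng: "\<forall>i\<in>V. 0 \<le> \<phi> i \<and> \<phi> i \<le> T + 1" and ps: "\<phi> s = 0" and pd: "\<phi> d = T + 1"
    unfolding cut_function_def by auto
  have Cb: "i \<in> V \<and> 1 \<le> \<phi> i \<and> \<phi> i \<le> T" if "i \<in> C" for i
    using assms(5) that rng unfolding X_set_def by force
  have sC: "s \<notin> C" using Cb ps by force
  have dC: "d \<notin> C" using Cb pd by force
  let ?pp = "phi_plus \<phi> C" and ?pm = "phi_minus \<phi> C"
  have rngp: "\<forall>i\<in>V. 0 \<le> ?pp i \<and> ?pp i \<le> T + 1" using rng Cb unfolding phi_plus_def by force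
  have rngm: "\<forall>i\<in>V. 0 \<le> ?pm i \<and> ?pm i \<le> T + 1" using rng Cb unfolding phi_minus_def by force
  define R where "R \<psi> = (\<Sum>(i,j)\<in>E. \<Sum>t\<in>{\<psi> i..\<psi> j - \<tau> - 1}. u i j t)" for \<psi> :: "'v \<Rightarrow> int"
  have c0: "cost V E \<tau> u T \<phi> = ennreal (R \<phi>)" unfolding R_def by (rule cost_eq[OF fE EV nn rng tau])
  have cp: "cost V E \<tau> u T ?pp = ennreal (R ?pp)" unfolding R_def by (rule cost_eq[OF fE EV nn rngp tau])
  have cm: "cost V E \<tau> u T ?pm = ennreal (R ?pm)" unfolding R_def by (rule cost_eq[OF fE EV nn rngm tau])
  have Rnn: "0 \<le> R \<psi>" for \<psi> unfolding R_def using nn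
    by (auto intro!: sum_nonneg)
  have iscut: "ten_is_cut V s d T (cut_of V T \<psi>)" if "\<psi> s = 0" "\<psi> d = T + 1" for \<psi> :: "'v \<Rightarrow> int"
    using that sV assms(2) unfolding ten_is_cut_def cut_of_def by auto
  have minp: "R \<phi> \<le> R ?pp"
  proof -
    have "cost V E \<tau> u T \<phi> \<le> cost V E \<tau> u T ?pp"
      using assms(4) iscut[of ?pp] sC dC ps pd unfolding ten_min_cut_def cost_def phi_plus_def by auto
    then show ?thesis using c0 cp Rnn by simp
  qed
  have minm: "R \<phi> \<le> R ?pm"
  proof -
    have "cost V E \<tau> u T \<phi> \<le> cost V E \<tau> u T ?pm"
      using assms(4) iscut[of ?pm] sC dC ps pd unfolding ten_min_cut_def cost_def phi_minus_def by auto
    then show ?thesis using c0 cm Rnn by simp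
  qed
  have F1: "u i' j' (\<phi> i) = u i' j' (\<phi> i - 1)" if "i \<in> C" "(i',j') \<in> E" for i i' j'
    using assms(6) that unfolding forbidden_def change_times_def by blast
  have F2: "u i' j' (\<phi> i - \<tau>) = u i' j' (\<phi> i - \<tau> - 1)" if "i \<in> C" "(i',j') \<in> E" for i i' j'
  proof (rule ccontr)
    assume "u i' j' (\<phi> i - \<tau>) \<noteq> u i' j' (\<phi> i - \<tau> - 1)"
    then have "\<phi> i - \<tau> \<in> change_times E u T" using that unfolding change_times_def by auto
    then have "\<phi> i \<in> (\<lambda>\<theta>. \<theta> + \<tau>) ` change_times E u T" by force
    then show False using assms(6) that unfolding forbidden_def by blast
  qed
  have F3: "\<phi> i \<noteq> \<phi> j - \<tau>" if "i \<in> C" "(i,j) \<in> E" "j \<notin> C" for i j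
    using assms(6) that EV unfolding forbidden_def by blast
  have F4: "\<phi> j \<noteq> \<phi> i + \<tau>" if "j \<in> C" "(i,j) \<in> E" "i \<notin> C" for i j
    using assms(6) that EV unfolding forbidden_def by blast
  have key: "(\<Sum>t\<in>{?pp i..?pp j - \<tau> - 1}. u i j t) + (\<Sum>t\<in>{?pm i..?pm j - \<tau> - 1}. u i j t)
      = 2 * (\<Sum>t\<in>{\<phi> i..\<phi> j - \<tau> - 1}. u i j t)" if ij: "(i,j) \<in> E" for i j
  proof (rule L_gen[where da = "if i \<in> C then 1 else 0" and dc = "if j \<in> C then 1 else 0"])
    show "(if i \<in> C then 1 else 0 :: int) = 1 \<Longrightarrow> u i j (\<phi> i) = u i j (\<phi> i - 1)"
      using F1 ij by (auto split: if_splits)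
    show "(if j \<in> C then 1 else 0 :: int) = 1 \<Longrightarrow> u i j (\<phi> j - \<tau> - 1 + 1) = u i j (\<phi> j - \<tau> - 1)"
      using F2[of j i j] ij by (auto split: if_splits)
    show "(if i \<in> C then 1 else 0 :: int) \<noteq> (if j \<in> C then 1 else 0) \<Longrightarrow> \<phi> i \<noteq> \<phi> j - \<tau> - 1 + 1"
      using F3[of i j] F4[of j i] ij by (auto split: if_splits)
  qed (auto simp: phi_plus_def phi_minus_def)
  have "R ?pp + R ?pm = 2 * R \<phi>"
    unfolding R_def by (simp add: sum.distrib[symmetric] sum_distrib_left case_prod_beta key)
  then have "R ?pp = R \<phi>" "R ?pm = R \<phi>" using minp minm by linarith+
  then show ?thesis using c0 cp cm by simp
qed

end
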